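(* Let $\Delta:M_n\to M_n$ be a weak-2-local derivation, let $p_1,\ldots,p_n$ be mutually orthogonal minimal projections in $M_n$, and let $q=1-p_n$. Suppose that $\Delta$ is symmetric (i.e. $\Delta(a^* )^*=\Delta(a)$ for all $a\in M_n$) and $\Delta(qa)=0$ for every $a\in M_n$. Then $\Delta(qa+p_naq)=0$ for every $a\in M_n$.
   Context: $M_n=M_n(\mathbb{C})$. A derivation on $M_n$ is a linear map $D$ with $D(ab)=D(a)b+aD(b)$. A (not necessarily linear) map $\Delta:M_n\to M_n$ is a weak-2-local derivation if for every $a,b\in M_n$ and every $\phi\in M_n^*$ there exists a derivation $D_{a,b,\phi}$ such that $\phi\Delta(a)=\phi D_{a,b,\phi}(a)$ and $\phi\Delta(b)=\phi D_{a,b,\phi}(b)$. *)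

theory Defs
  imports "HOL-Analysis.Analysis"
begin

text \<open>M_n(C) is rendered as the type complex^'n^'n with 'n a finite index type of size n.\<close>

type_synonym 'n cmat = "complex ^ 'n ^ 'n"

definition cmat_scale :: "complex \<Rightarrow> 'n::finite cmat \<Rightarrow> 'n cmat" where
  "cmat_scale c A = (\<chi> i j. c * A $ i $ j)"

definition cmat_adj :: "'n::finite cmat \<Rightarrow> 'n cmat" where
  "cmat_adj A = (\<chi> i j. cnj (A $ j $ i))"

definition is_derivation :: "('n::finite cmat \<Rightarrow> 'n cmat) \<Rightarrow> bool" where
  "is_derivation D \<longleftrightarrow>
     (\<forall>A B. D (A + B) = D A + D B) \<and>
     (\<forall>c A. D (cmat_scale c A) = cmat_scale c (D A)) \<and>
     (\<forall>A B. D (A ** B) = D A ** B + A ** D B)"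

definition cmat_functional :: "('n::finite cmat \<Rightarrow> complex) \<Rightarrow> bool" where
  "cmat_functional phi \<longleftrightarrow>
     (\<forall>A B. phi (A + B) = phi A + phi B) \<and>
     (\<forall>c A. phi (cmat_scale c A) = c * phi A)"

definition weak_2_local_derivation :: "('n::finite cmat \<Rightarrow> 'n cmat) \<Rightarrow> bool" where
  "weak_2_local_derivation \<Delta> \<longleftrightarrow>
     (\<forall>a b phi. cmat_functional phi \<longrightarrow>
        (\<exists>D. is_derivation D \<and> phi (\<Delta> a) = phi (D a) \<and> phi (\<Delta> b) = phi (D b)))"

definition is_projection :: "'n::finite cmat \<Rightarrow> bool" where
  "is_projection p \<longleftrightarrow> cmat_adj p = p \<and> p ** p = p"

text \<open>Minimal projection: nonzero projection with no subprojection other than 0 and itself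
  (e \<le> p for projections means e = e p).\<close>
definition minimal_projection :: "'n::finite cmat \<Rightarrow> bool" where
  "minimal_projection p \<longleftrightarrow> is_projection p \<and> p \<noteq> 0 \<and>
     (\<forall>e. is_projection e \<and> e ** p = e \<longrightarrow> e = 0 \<or> e = p)"

end

theory Submission
  imports Defs
begin


lemma mm_rdistrib: "((A::'a::semiring_1^'n^'m) + B) ** C = A ** C + B ** C"
  by (vector matrix_matrix_mult_def sum.distrib[symmetric] field_simps)
lemma mm_ldiff: "(A::'a::ring_1^'n^'m) ** (B - C) = A ** B - A ** C"
  by (vector matrix_matrix_mult_def sum_subtractf[symmetric] field_simps)
lemma mm_rdiff: "((A::'a::ring_1^'n^'m) - B) ** C = A ** C - B ** C"
  by (vector matrix_matrix_mult_def sum_subtractf[symmetric] field_simps)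
lemma mm_lneg: "(- (A::'a::ring_1^'n^'m)) ** C = - (A ** C)"
  by (vector matrix_matrix_mult_def sum_negf[symmetric] field_simps)
lemma mm_rneg: "(A::'a::ring_1^'n^'m) ** (- C) = - (A ** C)"
  by (vector matrix_matrix_mult_def sum_negf[symmetric] field_simps)

lemma scale_mm_l: "cmat_scale c A ** B = cmat_scale c (A ** B)"
  by (simp add: cmat_scale_def matrix_matrix_mult_def vec_eq_iff sum_distrib_left mult.assoc)
lemma scale_mm_r: "A ** cmat_scale c B = cmat_scale c (A ** B)"
  by (simp add: cmat_scale_def matrix_matrix_mult_def vec_eq_iff sum_distrib_left mult_ac)
lemma trace_scale: "trace (cmat_scale c A) = c * trace A"
  by (simp add: cmat_scale_def trace_def sum_distrib_left)

lemma adj_mult: "cmat_adj (A ** B) = cmat_adj B ** cmat_adj A"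
  by (simp add: cmat_adj_def matrix_matrix_mult_def vec_eq_iff mult.commute)
lemma adj_adj: "cmat_adj (cmat_adj A) = A"
  by (simp add: cmat_adj_def vec_eq_iff)
lemma adj_0: "cmat_adj 0 = 0"
  by (simp add: cmat_adj_def vec_eq_iff)
lemma adj_diff: "cmat_adj (A - B) = cmat_adj A - cmat_adj B"
  by (simp add: cmat_adj_def vec_eq_iff)
lemma adj_1: "cmat_adj (mat 1 :: 'n::finite cmat) = mat 1"
  by (simp add: cmat_adj_def vec_eq_iff mat_def)

lemma func_trace: "cmat_functional (\<lambda>Z. trace ((A::'n::finite cmat) ** Z ** B))"
  unfolding cmat_functional_def
  by (simp add: matrix_add_ldistrib mm_rdistrib trace_add scale_mm_l scale_mm_r trace_scale)

lemma func_add: "cmat_functional f \<Longrightarrow> cmat_functional g \<Longrightarrow> cmat_functional (\<lambda>Z. f Z + g Z)"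
  unfolding cmat_functional_def by (simp add: algebra_simps)

definition unitm :: "'n::finite \<Rightarrow> 'n \<Rightarrow> 'n cmat" where
  "unitm i j = (\<chi> a b. if a = i \<and> b = j then 1 else 0)"

lemma trace_unitm: "trace (unitm j i ** Z) = Z $ i $ j"
proof -
  have *: "\<And>ia. (\<Sum>k\<in>UNIV. if ia = j \<and> k = i then Z $ i $ j else 0) = (if ia = j then Z $ i $ j else 0)"
    by (auto simp: if_distrib sum.delta cong: if_cong)
  show ?thesis
    apply (simp add: trace_def unitm_def matrix_matrix_mult_def if_distrib if_distribR cong: if_cong)
    apply (simp only: *)
    apply simp
    done
qed

lemma zero_by_trace: "(\<And>E. trace (E ** M) = 0) \<Longrightarrow> (M :: 'n::finite cmat) = 0"
  by (metis trace_unitm vec_eq_iff zero_index)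

lemma func_zero: "cmat_functional f \<Longrightarrow> f 0 = 0"
  unfolding cmat_functional_def by (metis add_cancel_right_right add.right_neutral)

lemma der_add: "is_derivation D \<Longrightarrow> D (A + B) = D A + D B"
  unfolding is_derivation_def by blast
lemma der_mult: "is_derivation D \<Longrightarrow> D (A ** B) = D A ** B + A ** D B"
  unfolding is_derivation_def by blast
lemma der_diff: "is_derivation D \<Longrightarrow> D (A - B) = D A - D B"
  using der_add[of D "A - B" B] by simp
lemma der_one: "is_derivation D \<Longrightarrow> D (mat 1) = 0"
  using der_mult[of D "mat 1" "mat 1"] by simp

lemma pair:
  assumes "weak_2_local_derivation \<Delta>" "cmat_functional \<phi>" "\<Delta> y = 0"
    "\<And>D. is_derivation D \<Longrightarrow> \<phi> (D (x - y)) = 0"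
  shows "\<phi> (\<Delta> x) = 0"
proof -
  obtain D where D: "is_derivation D" "\<phi> (\<Delta> x) = \<phi> (D x)" "\<phi> (\<Delta> y) = \<phi> (D y)"
    using assms(1,2) unfolding weak_2_local_derivation_def by blast
  have "D x = D (x - y) + D y" using der_add[OF D(1), of "x - y" y] by simp
  then have "\<phi> (D x) = \<phi> (D (x - y)) + \<phi> (D y)"
    using assms(2) unfolding cmat_functional_def by simp
  then show ?thesis using D assms func_zero[OF assms(2)] by simp
qed



lemma rank1:
  fixes p :: "'n::finite cmat"
  assumes "minimal_projection p"
  shows "\<exists>j. p$j$j \<noteq> 0 \<and> (\<forall>a b. p$a$b = p$a$j * p$j$b / p$j$j)"
proof -
  have adjp: "cmat_adj p = p" using assms unfolding minimal_projection_def is_projection_def by simp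
  have herm: "\<And>a b. cnj (p$b$a) = p$a$b"
  proof -
    fix a b
    have "(cmat_adj p)$a$b = p$a$b" using adjp by simp
    then show "cnj (p$b$a) = p$a$b" unfolding cmat_adj_def by simp
  qed
  have pp: "p ** p = p" using assms unfolding minimal_projection_def is_projection_def by simp
  have ppe: "\<And>a b. (\<Sum>k\<in>UNIV. p$a$k * p$k$b) = p$a$b"
  proof -
    fix a b
    have "(p ** p)$a$b = p$a$b" using pp by simp
    then show "(\<Sum>k\<in>UNIV. p$a$k * p$k$b) = p$a$b" unfolding matrix_matrix_mult_def by simp
  qed
  have "\<exists>j. p$j$j \<noteq> 0"
  proof (rule ccontr)
    assume "\<not> ?thesis"
    then have z: "\<And>j. p$j$j = 0" by blast
    have "\<And>k j. p$k$j = 0"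
    proof -
      fix k j
      have "p$j$j = (\<Sum>k\<in>UNIV. cnj (p$k$j) * p$k$j)" using ppe[of j j] herm by simp
      also have "\<dots> = of_real (\<Sum>k\<in>UNIV. (cmod (p$k$j))^2)"
        unfolding of_real_sum by (rule sum.cong, simp, metis complex_norm_square mult.commute)
      finally have "(\<Sum>k\<in>UNIV. (cmod (p$k$j))^2) = 0" using z[of j] by (metis of_real_eq_0_iff)
      then have "\<forall>k\<in>UNIV. (cmod (p$k$j))^2 = 0"
        by (subst sum_nonneg_eq_0_iff[symmetric]) auto
      then show "p$k$j = 0" by simp
    qed
    then have "p = 0" by (simp add: vec_eq_iff)
    then show False using assms unfolding minimal_projection_def by simp
  qed
  then obtain j where j: "p$j$j \<noteq> 0" by blast
  have cj: "cnj (p$j$j) = p$j$j" using herm by simp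
  define e :: "'n cmat" where "e = (\<chi> a b. p$a$j * p$j$b / p$j$j)"
  have e_adj: "cmat_adj e = e"
    unfolding e_def cmat_adj_def vec_eq_iff using herm cj by (simp add: mult.commute)
  have "\<And>a b. (e ** e)$a$b = e$a$b"
  proof -
    fix a b
    have "(e ** e)$a$b = (\<Sum>k\<in>UNIV. (p$a$j * p$j$b / (p$j$j * p$j$j)) * (p$j$k * p$k$j))"
      unfolding e_def matrix_matrix_mult_def by (simp add: field_simps)
    also have "\<dots> = (p$a$j * p$j$b / (p$j$j * p$j$j)) * p$j$j"
      by (simp only: sum_distrib_left[symmetric] ppe)
    also have "\<dots> = e$a$b" unfolding e_def using j by (simp add: field_simps)
    finally show "(e ** e)$a$b = e$a$b" .
  qed
  then have e_idem: "e ** e = e" by (simp add: vec_eq_iff)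
  have "\<And>a b. (e ** p)$a$b = e$a$b"
  proof -
    fix a b
    have "(e ** p)$a$b = (\<Sum>k\<in>UNIV. (p$a$j / p$j$j) * (p$j$k * p$k$b))"
      unfolding e_def matrix_matrix_mult_def by (simp add: field_simps)
    also have "\<dots> = (p$a$j / p$j$j) * p$j$b"
      by (simp only: sum_distrib_left[symmetric] ppe)
    also have "\<dots> = e$a$b" unfolding e_def by simp
    finally show "(e ** p)$a$b = e$a$b" .
  qed
  then have ep: "e ** p = e" by (simp add: vec_eq_iff)
  have "e$j$j \<noteq> 0" unfolding e_def using j by simp
  then have "e \<noteq> 0" by auto
  then have "e = p" using assms e_adj e_idem ep
    unfolding minimal_projection_def is_projection_def by blast
  then have pe: "\<And>a b. p$a$b = e$a$b" by simp
  show ?thesis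
  proof (intro exI[of _ j] conjI allI)
    show "p$j$j \<noteq> 0" by (rule j)
    fix a b
    have "e$a$b = p$a$j * p$j$b / p$j$j" unfolding e_def by simp
    then show "p$a$b = p$a$j * p$j$b / p$j$j" using pe[of a b] by simp
  qed
qed

lemma minimal_block_zero:
  fixes p M :: "'n::finite cmat"
  assumes mp: "minimal_projection p" and M: "p ** M ** p = M" and tr: "trace M = 0"
  shows "M = 0"
proof -
  obtain j where j: "p$j$j \<noteq> 0" and pf: "\<And>a b. p$a$b = p$a$j * p$j$b / p$j$j"
    using rank1[OF mp] by blast
  have pp: "p ** p = p" using mp unfolding minimal_projection_def is_projection_def by simp
  have ppe: "(\<Sum>k\<in>UNIV. p$j$k * p$k$j) = p$j$j"
  proof -
    have "(p ** p)$j$j = p$j$j" using pp by simp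
    then show ?thesis unfolding matrix_matrix_mult_def by simp
  qed
  define u where "u a = p$a$j" for a
  define w where "w b = p$j$b / p$j$j" for b
  have P: "p = (\<chi> a b. u a * w b)"
  proof -
    have "\<And>a b. p$a$b = u a * w b"
    proof -
      fix a b
      have "p$a$b = p$a$j * p$j$b / p$j$j" by (rule pf)
      then show "p$a$b = u a * w b" unfolding u_def w_def by (simp only: times_divide_eq_right)
    qed
    then show ?thesis by (simp add: vec_eq_iff)
  qed
  have wu: "(\<Sum>a\<in>UNIV. w a * u a) = 1"
  proof -
    have "(\<Sum>a\<in>UNIV. w a * u a) = (\<Sum>a\<in>UNIV. p$j$a * p$a$j) / p$j$j"
      unfolding u_def w_def by (simp add: sum_divide_distrib)
    then show ?thesis using ppe j by simp
  qed
  define s where "s = (\<Sum>c\<in>UNIV. (\<Sum>d\<in>UNIV. w d * M$d$c) * u c)"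
  have Mab: "\<And>a b. M$a$b = u a * w b * s"
  proof -
    fix a b
    have "M$a$b = (p ** M ** p)$a$b" using M by simp
    also have "\<dots> = (\<Sum>c\<in>UNIV. (\<Sum>d\<in>UNIV. u a * w d * M$d$c) * (u c * w b))"
      unfolding matrix_matrix_mult_def P by simp
    also have "\<dots> = u a * w b * s"
      unfolding s_def by (simp add: sum_distrib_left sum_distrib_right mult_ac)
    finally show "M$a$b = u a * w b * s" .
  qed
  have "trace M = (\<Sum>a\<in>UNIV. w a * u a) * s"
    unfolding trace_def Mab by (simp add: sum_distrib_left sum_distrib_right mult_ac)
  then have "s = 0" using tr wu by simp
  then show ?thesis using Mab by (simp add: vec_eq_iff)
qed



lemma trace_zero[simp]: "trace (0::'a::semiring_1^'n^'n) = 0"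
  by (simp add: trace_def)

lemma func_trace2:
  fixes E A B :: "'n::finite cmat"
  shows "cmat_functional (\<lambda>Z. trace (E ** (A ** Z ** B)))"
  using func_trace[of "E ** A" B] by (simp add: matrix_mul_assoc)

lemma func_trace0: "cmat_functional (trace :: 'n::finite cmat \<Rightarrow> complex)"
  using func_trace[of "mat 1" "mat 1"] by simp

theorem lemma2p7:
  fixes \<Delta> :: "'n::finite cmat \<Rightarrow> 'n cmat"
    and p :: "'n \<Rightarrow> 'n cmat"
    and k :: 'n
  assumes "weak_2_local_derivation \<Delta>"
    and "\<And>i. minimal_projection (p i)"
    and "\<And>i j. i \<noteq> j \<Longrightarrow> p i ** p j = 0"
    and "\<And>a. cmat_adj (\<Delta> (cmat_adj a)) = \<Delta> a"
    and "\<And>a. \<Delta> ((mat 1 - p k) ** a) = 0"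
  shows "\<And>a. \<Delta> ((mat 1 - p k) ** a + p k ** a ** (mat 1 - p k)) = 0"
proof -
  fix a
  note W = assms(1)
  define P where "P = p k"
  define q where "q = mat 1 - P"
  have mp: "minimal_projection P" unfolding P_def by (rule assms(2))
  have pp: "P ** P = P" and adjp: "cmat_adj P = P"
    using mp unfolding minimal_projection_def is_projection_def by auto
  have pq: "P ** q = 0" unfolding q_def by (simp add: mm_ldiff pp)
  have qp: "q ** P = 0" unfolding q_def by (simp add: mm_rdiff pp)
  have qq: "q ** q = q" unfolding q_def by (simp add: mm_rdiff mm_ldiff pp)
  have adjq: "cmat_adj q = q" unfolding q_def by (simp add: adj_diff adj_1 adjp)
  have pplusq: "P + q = mat 1" unfolding q_def by simp
  have pqX: "\<And>X. X ** P ** q = 0" by (metis matrix_mul_assoc pq times0_right)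
  have qpX: "\<And>X. X ** q ** P = 0" by (metis matrix_mul_assoc qp times0_right)
  have ppX: "\<And>X. X ** P ** P = X ** P" by (metis matrix_mul_assoc pp)
  have qqX: "\<And>X. X ** q ** q = X ** q" by (metis matrix_mul_assoc qq)
  note S = matrix_mul_assoc matrix_add_ldistrib mm_rdistrib mm_ldiff mm_rdiff mm_lneg mm_rneg
    pp pq qp qq pqX qpX ppX qqX
  have Z0: "\<And>b. \<Delta> (q ** b) = 0" unfolding q_def P_def by (rule assms(5))
  have Z1: "\<And>b. \<Delta> (b ** q) = 0"
  proof -
    fix b
    have "\<Delta> (b ** q) = cmat_adj (\<Delta> (cmat_adj (b ** q)))" using assms(4) by simp
    also have "\<dots> = 0" by (simp add: adj_mult adjq Z0 adj_0)
    finally show "\<Delta> (b ** q) = 0" .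
  qed
  have rdec: "\<And>Z. Z ** P + Z ** q = Z"
    by (metis matrix_add_ldistrib matrix_mul_rid pplusq)
  have ldec: "\<And>Z. P ** Z + q ** Z = Z"
    by (metis mm_rdistrib matrix_mul_lid pplusq)
  have dec: "\<And>Z. P ** Z ** P + P ** Z ** q + q ** Z ** P + q ** Z ** q = Z"
    by (metis rdec ldec add.assoc)
  have dq: "\<And>D::'n cmat \<Rightarrow> 'n cmat. is_derivation D \<Longrightarrow> D q = - D P"
    unfolding q_def by (simp add: der_diff der_one)
  have dp: "\<And>D::'n cmat \<Rightarrow> 'n cmat. is_derivation D \<Longrightarrow> D P = D P ** P + P ** D P"
    using der_mult pp by metis
  have qdpq: "\<And>D::'n cmat \<Rightarrow> 'n cmat. is_derivation D \<Longrightarrow> q ** D P ** q = 0"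
  proof -
    fix D :: "'n cmat \<Rightarrow> 'n cmat" assume D: "is_derivation D"
    have "q ** D P ** q = q ** (D P ** P + P ** D P) ** q" using dp[OF D] by simp
    also have "\<dots> = 0" by (simp add: S)
    finally show "q ** D P ** q = 0" .
  qed
  have qdpp: "\<And>D::'n cmat \<Rightarrow> 'n cmat. is_derivation D \<Longrightarrow> q ** D P ** P = q ** D P"
    using qdpq rdec by (metis add.right_neutral)
  have qdp: "\<And>D::'n cmat \<Rightarrow> 'n cmat. is_derivation D \<Longrightarrow> q ** D P = D P ** P"
  proof -
    fix D :: "'n cmat \<Rightarrow> 'n cmat" assume D: "is_derivation D"
    have "P ** D P + q ** D P = D P ** P + P ** D P" using ldec dp[OF D] by metis
    then show "q ** D P = D P ** P" by (simp add: algebra_simps)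
  qed
  define x where "x = q ** a + P ** a ** q"
  have st1: "P ** \<Delta> x ** q = 0"
  proof (rule zero_by_trace)
    fix E
    have "trace (E ** (P ** \<Delta> x ** q)) = 0"
    proof (rule pair[OF W func_trace2 Z1[of x]])
      fix D :: "'n cmat \<Rightarrow> 'n cmat" assume D: "is_derivation D"
      have "x - x ** q = x ** P" using rdec[of x] by (metis add_diff_cancel_right')
      also have "\<dots> = q ** a ** P" unfolding x_def by (simp add: S)
      finally have e: "x - x ** q = q ** a ** P" .
      have "P ** D (q ** a ** P) ** q = 0"
        by (simp add: der_mult[OF D] S)
      then show "trace (E ** (P ** D (x - x ** q) ** q)) = 0" unfolding e by simp
    qed
    then show "trace (E ** (P ** \<Delta> x ** q)) = 0" .
  qed
  have st2: "q ** \<Delta> x ** P = 0"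
  proof (rule zero_by_trace)
    fix E
    show "trace (E ** (q ** \<Delta> x ** P)) = 0"
    proof (rule pair[OF W func_trace2 Z0[of x]])
      fix D :: "'n cmat \<Rightarrow> 'n cmat" assume D: "is_derivation D"
      have "x - q ** x = P ** x" using ldec[of x] by (metis add_diff_cancel_right')
      also have "\<dots> = P ** a ** q" unfolding x_def by (simp add: S)
      finally have e: "x - q ** x = P ** a ** q" .
      have "q ** D (P ** a ** q) ** P = 0"
        by (simp add: der_mult[OF D] S)
      then show "trace (E ** (q ** D (x - q ** x) ** P)) = 0" unfolding e by simp
    qed
  qed
  have st3: "q ** \<Delta> x ** q = 0"
  proof (rule zero_by_trace)
    fix E
    have "trace (E ** (q ** \<Delta> x ** q)) + trace (E ** (q ** \<Delta> x ** (P ** a ** q))) = 0"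
    proof (rule pair[OF W func_add[OF func_trace2 func_trace2] Z0[of "a - mat 1"]])
      fix D :: "'n cmat \<Rightarrow> 'n cmat" assume D: "is_derivation D"
      have e: "x - q ** (a - mat 1) = P ** a ** q + q" unfolding x_def by (simp add: mm_ldiff)
      have "q ** D (P ** a ** q + q) ** q + q ** D (P ** a ** q + q) ** (P ** a ** q) = 0"
        by (simp add: der_mult[OF D] der_add[OF D] dq[OF D] qdpq[OF D] qdpp[OF D] S)
      then show "trace (E ** (q ** D (x - q ** (a - mat 1)) ** q)) +
          trace (E ** (q ** D (x - q ** (a - mat 1)) ** (P ** a ** q))) = 0"
        unfolding e by (simp add: trace_add[symmetric] matrix_add_ldistrib[symmetric])
    qed
    moreover have "q ** \<Delta> x ** (P ** a ** q) = 0"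
      using st2 by (metis matrix_mul_assoc times0_left)
    ultimately show "trace (E ** (q ** \<Delta> x ** q)) = 0" by simp
  qed
  have tr: "trace (\<Delta> x) = 0"
  proof (rule pair[OF W func_trace0 Z0[of a]])
    fix D :: "'n cmat \<Rightarrow> 'n cmat" assume D: "is_derivation D"
    have e: "x - q ** a = P ** (a ** q)" unfolding x_def by (simp add: matrix_mul_assoc)
    have d: "D (P ** (a ** q)) = D P ** (a ** q) + P ** (D a ** q) + P ** (a ** D q)"
      by (simp add: der_mult[OF D] matrix_add_ldistrib)
    have t1: "trace (D P ** (a ** q)) = trace (D P ** P ** a)"
      by (metis trace_mul_sym matrix_mul_assoc qdp[OF D])
    have t2: "trace (P ** (D a ** q)) = 0"
      by (metis trace_mul_sym matrix_mul_assoc qp times0_left trace_0 mat_0)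
    have t3: "trace (P ** (a ** D q)) = - trace (D P ** P ** a)"
      by (metis trace_mul_sym matrix_mul_assoc dq[OF D] mm_lneg trace_sub diff_0 trace_0 mat_0)
    show "trace (D (x - q ** a)) = 0" unfolding e d by (simp add: trace_add t1 t2 t3)
  qed
  have M: "\<Delta> x = P ** \<Delta> x ** P" using dec[of "\<Delta> x"] st1 st2 st3 by simp
  have "P ** \<Delta> x ** P = 0"
  proof (rule minimal_block_zero[OF mp])
    show "P ** (P ** \<Delta> x ** P) ** P = P ** \<Delta> x ** P" by (simp add: S)
    show "trace (P ** \<Delta> x ** P) = 0" using tr M by simp
  qed
  then have "\<Delta> x = 0" using M by simp
  then show "\<Delta> ((mat 1 - p k) ** a + p k ** a ** (mat 1 - p k)) = 0"
    unfolding x_def q_def P_def .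
qed

end
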